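(* Fix $\vartheta_1\in(0,\pi/2)$. For an integer $k\ge0$, let $\eta_k$ be the unique solution of $\tan\eta=\eta$ in $[k\pi,k\pi+\pi/2)$ and $\eta_k'=\eta_k-k\pi$. If $\vartheta_1<\eta_k'$, then $$\Phi(\eta_{k+1})\ge\Phi(\eta_k)+\pi(1-\cos\vartheta_1).$$ In particular $\lim_{k\to\infty}\Phi(\eta_k)=\infty$.
   Context: For integers $k\ge0$ let $I_k=[\vartheta_1+k\pi,(k+1)\pi-\vartheta_1]$. For $\eta\in I_k$ set $\gamma(\eta)=\sqrt{1-\sin^2\vartheta_1/\sin^2\eta}$ and $$\Phi(\eta)=-\eta\,\gamma(\eta)+k\pi+\arccos\Big(\frac{\cos(\eta-k\pi)}{\cos\vartheta_1}\Big),\qquad\arccos\in[0,\pi].$$ (When $\vartheta_1<\eta_k'$, one has $\eta_k\in I_k$ and $\eta_{k+1}\in I_{k+1}$; $\Phi(\eta_k)$ is defined for all large $k$ since $\eta_k'\to\pi/2$.) *)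

theory Defs
  imports "HOL-Analysis.Analysis"
begin

definition eta :: "nat \<Rightarrow> real" where
  "eta k = (THE x. x \<in> {real k * pi ..< real k * pi + pi / 2} \<and> tan x = x)"

definition eta' :: "nat \<Rightarrow> real" where
  "eta' k = eta k - real k * pi"

definition gam :: "real \<Rightarrow> real \<Rightarrow> real" where
  "gam th1 x = sqrt (1 - (sin th1)\<^sup>2 / (sin x)\<^sup>2)"

text \<open>Phi on the interval I_k (index k explicit).\<close>
definition Phi :: "real \<Rightarrow> nat \<Rightarrow> real \<Rightarrow> real" where
  "Phi th1 k x = - x * gam th1 x + real k * pi + arccos (cos (x - real k * pi) / cos th1)"

end

theory Submission
  imports Defs
begin

lemma arctan_strict:
  fixes a b :: real
  assumes "0 \<le> a" "a < b"
  shows "arctan b - arctan a < b - a"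
proof -
  have "\<And>x. a \<le> x \<Longrightarrow> x \<le> b \<Longrightarrow> DERIV arctan x :> inverse (1 + x\<^sup>2)"
    by (auto intro: DERIV_arctan)
  from MVT2[OF assms(2) this] obtain z where z: "a < z" "z < b"
    "arctan b - arctan a = (b - a) * inverse (1 + z\<^sup>2)" by blast
  have "inverse (1 + z\<^sup>2) < 1" using z assms
    by (simp add: inverse_less_1_iff)
  then show ?thesis using z assms by (simp add: mult_less_cancel_left1)
qed

lemma eta_char:
  fixes x :: real
  assumes "x \<in> {real k * pi ..< real k * pi + pi / 2}" "tan x = x"
  shows "arctan x = x - real k * pi"
proof -
  have "tan (x - real k * pi) = x"
    using assms(2) tan_periodic_nat[of "x - real k * pi" k] by simp
  moreover have "-(pi/2) < x - real k * pi" "x - real k * pi < pi/2" using assms(1) by auto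
  ultimately show ?thesis using arctan_tan by metis
qed

lemma eta_ex:
  "\<exists>x. x \<in> {real k * pi ..< real k * pi + pi / 2} \<and> tan x = x"
proof -
  let ?f = "\<lambda>x::real. x - arctan x"
  have a: "?f (real k * pi) \<le> real k * pi" by simp
  have b: "real k * pi \<le> ?f (real k * pi + pi/2)" using arctan_ubound[of "real k * pi + pi/2"] by simp
  have c: "\<forall>x. real k * pi \<le> x \<and> x \<le> real k * pi + pi/2 \<longrightarrow> isCont ?f x"
    by (auto intro!: continuous_intros)
  from IVT[of ?f "real k * pi" "real k * pi" "real k * pi + pi/2", OF a b _ c]
  obtain x where x: "real k * pi \<le> x" "x \<le> real k * pi + pi/2" "x - arctan x = real k * pi"
    by auto
  have "x < real k * pi + pi / 2" using x(3) arctan_ubound[of x] by linarith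
  moreover have "tan x = x"
  proof -
    have "x = arctan x + real k * pi" using x(3) by simp
    then have "tan x = tan (arctan x)" by (metis tan_periodic_nat)
    then show ?thesis by (simp add: tan_arctan)
  qed
  ultimately show ?thesis using x by auto
qed

lemma eta_uniq:
  assumes "x \<in> {real k * pi ..< real k * pi + pi / 2} \<and> tan x = x"
      and "y \<in> {real k * pi ..< real k * pi + pi / 2} \<and> tan y = y"
  shows "x = y"
proof (rule ccontr)
  assume ne: "x \<noteq> y"
  have ax: "arctan x = x - real k * pi" using eta_char assms(1) by blast
  have ay: "arctan y = y - real k * pi" using eta_char assms(2) by blast
  have x0: "0 \<le> x" "0 \<le> y" using assms by (auto intro: order_trans[rotated])
  show False
  proof (cases "x < y")
    case True
    from arctan_strict[OF x0(1) True] ax ay show False by simp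
  next
    case False
    then have "y < x" using ne by simp
    from arctan_strict[OF x0(2) this] ax ay show False by simp
  qed
qed

lemma eta_props:
  "eta k \<in> {real k * pi ..< real k * pi + pi / 2}" "tan (eta k) = eta k"
  "arctan (eta k) = eta k - real k * pi"
proof -
  have "eta k \<in> {real k * pi ..< real k * pi + pi / 2} \<and> tan (eta k) = eta k"
    unfolding eta_def by (rule theI') (use eta_ex[of k] eta_uniq[of _ k] in blast)
  then show "eta k \<in> {real k * pi ..< real k * pi + pi / 2}" "tan (eta k) = eta k"
    "arctan (eta k) = eta k - real k * pi" using eta_char by auto
qed


lemma Phi_eta:
  fixes th1 :: real
  assumes th: "0 < th1" "th1 < pi / 2" and lt: "tan th1 < eta k"
  defines "c \<equiv> cos th1" and "s \<equiv> sin th1"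
  shows "Phi th1 k (eta k) = real k * pi
     - (sqrt (c\<^sup>2 * (eta k)\<^sup>2 - s\<^sup>2) - arctan (sqrt (c\<^sup>2 * (eta k)\<^sup>2 - s\<^sup>2)))"
proof -
  define e where "e = eta k"
  define D where "D = sqrt (c\<^sup>2 * e\<^sup>2 - s\<^sup>2)"
  have c0: "c > 0" unfolding c_def using th by (simp add: cos_gt_zero)
  have s0: "s > 0" unfolding s_def using th by (simp add: sin_gt_zero)
  have tanth: "tan th1 = s / c" unfolding s_def c_def tan_def ..
  have sc: "s\<^sup>2 + c\<^sup>2 = 1" unfolding s_def c_def by simp
  have e0: "e > 0" using lt s0 c0 tanth unfolding e_def by (smt (verit) divide_pos_pos)
  have "s / c < e" using lt tanth e_def by simp
  then have "s < c * e" using c0 by (simp add: divide_less_eq mult.commute)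
  then have "s\<^sup>2 < (c*e)\<^sup>2" using s0 by (simp add: power_strict_mono)
  then have Dpos: "c\<^sup>2 * e\<^sup>2 - s\<^sup>2 > 0" by (simp add: power_mult_distrib)
  have D0: "D > 0" unfolding D_def using Dpos by simp
  have D2: "D\<^sup>2 = c\<^sup>2 * e\<^sup>2 - s\<^sup>2" unfolding D_def using Dpos by simp
  have ae: "arctan e = e - real k * pi" using eta_props(3) e_def by simp
  have eeq: "e = arctan e + real k * pi" using ae by simp
  have sine: "(sin e)\<^sup>2 = e\<^sup>2 / (1 + e\<^sup>2)"
  proof -
    have "sin e = sin (arctan e) * (-1)^k"
      by (subst eeq) (simp add: sin_add)
    moreover have "((-1::real)^k)\<^sup>2 = 1" by (induct k) (simp_all add: power2_eq_square)
    ultimately have "(sin e)\<^sup>2 = (sin (arctan e))\<^sup>2"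
      by (simp add: power_mult_distrib)
    also have "\<dots> = e\<^sup>2 / (1 + e\<^sup>2)" by (simp add: sin_arctan power_divide)
    finally show ?thesis .
  qed
  have gam: "e * gam th1 e = D"
  proof -
    have "1 - s\<^sup>2 / (sin e)\<^sup>2 = (c\<^sup>2 * e\<^sup>2 - s\<^sup>2) / e\<^sup>2"
      using sine e0 sc by (simp add: field_simps) (metis distrib_left mult.commute mult_1_right)
    then have "gam th1 e = D / e" unfolding gam_def D_def s_def[symmetric]
      using e0 by (simp add: real_sqrt_divide)
    then show ?thesis using e0 by simp
  qed
  have cose: "cos (e - real k * pi) = 1 / sqrt (1 + e\<^sup>2)"
    using ae[symmetric] by (simp add: cos_arctan)
  have "sqrt (1 + D\<^sup>2) = c * sqrt (1 + e\<^sup>2)"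
  proof -
    have "1 + D\<^sup>2 = c\<^sup>2 * (1 + e\<^sup>2)" using D2 sc by (simp add: algebra_simps)
    then show ?thesis using c0 by (simp add: real_sqrt_mult)
  qed
  then have "cos (e - real k * pi) / c = cos (arctan D)"
    using cose c0 by (simp add: cos_arctan)
  then have arc: "arccos (cos (e - real k * pi) / c) = arctan D"
  proof -
    have "arctan D \<le> pi" using arctan_ubound[of D] pi_gt_zero by linarith
    then show ?thesis using D0 arccos_cos[of "arctan D"] \<open>cos (e - real k * pi) / c = cos (arctan D)\<close> by simp
  qed
  show ?thesis unfolding Phi_def e_def[symmetric] D_def[symmetric] c_def[symmetric]
    using gam arc by simp
qed


lemma H_mono:
  fixes c s a b :: real
  assumes c0: "c > 0" and sc: "s\<^sup>2 + c\<^sup>2 = 1" and a0: "0 < a"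
    and as: "s\<^sup>2 < c\<^sup>2 * a\<^sup>2" and ab: "a \<le> b"
  defines "H \<equiv> \<lambda>x. sqrt (c\<^sup>2 * x\<^sup>2 - s\<^sup>2) - arctan (sqrt (c\<^sup>2 * x\<^sup>2 - s\<^sup>2)) - c * (x - arctan x)"
  shows "H b \<le> H a"
proof -
  have "\<exists>y. DERIV H x :> y \<and> y \<le> 0" if x: "a \<le> x" "x \<le> b" for x
  proof -
    define q where "q = c\<^sup>2 * x\<^sup>2 - s\<^sup>2"
    define D where "D = sqrt q"
    have "a\<^sup>2 \<le> x\<^sup>2" using x a0 by (intro power_mono) auto
    then have "c\<^sup>2 * a\<^sup>2 \<le> c\<^sup>2 * x\<^sup>2" by (simp add: mult_left_mono)
    then have q0: "q > 0" unfolding q_def using as by simp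
    have D0: "D > 0" unfolding D_def using q0 by simp
    have D2: "D\<^sup>2 = q" unfolding D_def using q0 by simp
    have x0: "x > 0" using x a0 by simp
    define d where "d = (1 - inverse (1 + D\<^sup>2)) * (inverse D / 2 * (c\<^sup>2 * (2 * x))) - c * (1 - inverse (1 + x\<^sup>2))"
    have der: "DERIV H x :> d"
      unfolding H_def d_def D_def q_def
      using q0[unfolded q_def]
      by (auto intro!: derivative_eq_intros simp: power2_eq_square) (simp add: algebra_simps)
    have "d \<le> 0"
    proof -
      have "1 + D\<^sup>2 = c\<^sup>2 * (1 + x\<^sup>2)" using D2 sc unfolding q_def by (simp add: algebra_simps)
      have e1: "(1 - inverse (1 + D\<^sup>2)) = D\<^sup>2 / (1 + D\<^sup>2)"
      proof -
        have "1 + D\<^sup>2 > 0" by (simp add: add_pos_nonneg)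
        then show ?thesis by (simp add: field_simps)
      qed
      have "d = D * x / (1 + x\<^sup>2) - c * x\<^sup>2 / (1 + x\<^sup>2)"
      proof -
        have p: "1 + x\<^sup>2 > 0" by (simp add: add_pos_nonneg)
        have t1: "(D\<^sup>2 / (c\<^sup>2 * (1 + x\<^sup>2))) * (inverse D / 2 * (c\<^sup>2 * (2 * x))) = D * x / (1 + x\<^sup>2)"
        proof -
          have "c*c + c*(c*(x*x)) > 0" using c0 by (simp add: add_pos_nonneg)
          then show ?thesis using D0 c0 p by (simp add: field_simps power2_eq_square)
        qed
        have t2: "c * (1 - inverse (1 + x\<^sup>2)) = c * x\<^sup>2 / (1 + x\<^sup>2)"
          using p by (simp add: field_simps)
        show ?thesis unfolding d_def unfolding e1 unfolding \<open>1 + D\<^sup>2 = c\<^sup>2 * (1 + x\<^sup>2)\<close> unfolding t1 t2 ..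
      qed
      moreover have "D \<le> c * x"
        unfolding D_def q_def using c0 x0 by (intro real_le_lsqrt) (auto simp: power_mult_distrib)
      then have "D * x \<le> c * x\<^sup>2" using x0 by (simp add: power2_eq_square mult_right_mono)
      ultimately show ?thesis
        by (simp add: diff_divide_distrib[symmetric]) (intro divide_nonpos_pos, simp_all add: add_pos_nonneg)
    qed
    then show ?thesis using der by blast
  qed
  from DERIV_nonpos_imp_nonincreasing[OF ab this] show ?thesis .
qed


lemma tan_lt_imp:
  fixes th1 x :: real
  assumes th: "0 < th1" "th1 < pi / 2" and lt: "tan th1 < x"
  shows "x > 0" "(sin th1)\<^sup>2 < (cos th1)\<^sup>2 * x\<^sup>2"
proof -
  define c where "c = cos th1"
  define s where "s = sin th1"
  have c0: "c > 0" unfolding c_def using th by (simp add: cos_gt_zero)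
  have s0: "s > 0" unfolding s_def using th by (simp add: sin_gt_zero)
  have tanth: "tan th1 = s / c" unfolding s_def c_def tan_def ..
  show "x > 0" using lt s0 c0 tanth by (smt (verit) divide_pos_pos)
  have "s / c < x" using lt tanth by simp
  then have "s < c * x" using c0 by (simp add: divide_less_eq mult.commute)
  then have "s\<^sup>2 < (c*x)\<^sup>2" using s0 by (simp add: power_strict_mono)
  then show "(sin th1)\<^sup>2 < (cos th1)\<^sup>2 * x\<^sup>2" unfolding c_def s_def by (simp add: power_mult_distrib)
qed

lemma Phi_step:
  fixes th1 :: real
  assumes th: "0 < th1" "th1 < pi / 2" and lt: "tan th1 < eta k"
  shows "Phi th1 (Suc k) (eta (Suc k)) \<ge> Phi th1 k (eta k) + pi * (1 - cos th1)"
proof -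
  define c where "c = cos th1"
  define s where "s = sin th1"
  define a where "a = eta k"
  define b where "b = eta (Suc k)"
  have c0: "c > 0" unfolding c_def using th by (simp add: cos_gt_zero)
  have sc: "s\<^sup>2 + c\<^sup>2 = 1" unfolding s_def c_def by simp
  have "a < real k * pi + pi / 2" using eta_props(1)[of k] a_def by simp
  moreover have "real (Suc k) * pi \<le> b" using eta_props(1)[of "Suc k"] b_def by simp
  moreover have "real (Suc k) * pi = real k * pi + pi" by (simp add: algebra_simps)
  ultimately have ab: "a \<le> b" using pi_gt_zero by linarith
  have a0: "a > 0" and as: "s\<^sup>2 < c\<^sup>2 * a\<^sup>2" using tan_lt_imp[OF th lt] a_def s_def c_def by auto
  have ltb: "tan th1 < eta (Suc k)" using lt ab a_def b_def by simp
  define f where "f = (\<lambda>x::real. sqrt (c\<^sup>2 * x\<^sup>2 - s\<^sup>2) - arctan (sqrt (c\<^sup>2 * x\<^sup>2 - s\<^sup>2)))"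
  have H: "f b - c * (b - arctan b) \<le> f a - c * (a - arctan a)"
    using H_mono[OF c0 sc a0 as ab] unfolding f_def by simp
  have eb: "b - arctan b = real (Suc k) * pi" using eta_props(3)[of "Suc k"] b_def by simp
  have ea: "a - arctan a = real k * pi" using eta_props(3)[of k] a_def by simp
  have "c * (b - arctan b) = c * (real k * pi) + c * pi" unfolding eb by (simp add: algebra_simps)
  moreover have "c * (a - arctan a) = c * (real k * pi)" unfolding ea ..
  ultimately have "f b \<le> f a + c * pi" using H by linarith
  moreover have "Phi th1 k (eta k) = real k * pi - f a"
    using Phi_eta[OF th lt] unfolding f_def a_def c_def s_def by simp
  moreover have "Phi th1 (Suc k) (eta (Suc k)) = real (Suc k) * pi - f b"
    using Phi_eta[OF th ltb] unfolding f_def b_def c_def s_def by simp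
  ultimately show ?thesis unfolding c_def by (simp add: algebra_simps)
qed

theorem corollary5p28:
  fixes th1 :: real
  assumes "0 < th1" and "th1 < pi / 2"
  shows "(\<forall>k. th1 < eta' k \<longrightarrow>
            Phi th1 (Suc k) (eta (Suc k)) \<ge> Phi th1 k (eta k) + pi * (1 - cos th1))
         \<and> filterlim (\<lambda>k. Phi th1 k (eta k)) at_top sequentially"
proof
  have th: "0 < th1" "th1 < pi / 2" by fact+
  show "\<forall>k. th1 < eta' k \<longrightarrow>
            Phi th1 (Suc k) (eta (Suc k)) \<ge> Phi th1 k (eta k) + pi * (1 - cos th1)"
  proof (intro allI impI)
    fix k assume "th1 < eta' k"
    then have "arctan (tan th1) < arctan (eta k)"
      using eta_props(3)[of k] arctan_tan[of th1] th unfolding eta'_def by simp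
    then have "tan th1 < eta k" by (simp add: arctan_less_iff)
    then show "Phi th1 (Suc k) (eta (Suc k)) \<ge> Phi th1 k (eta k) + pi * (1 - cos th1)"
      using Phi_step[OF th] by blast
  qed
  define \<alpha> where "\<alpha> = pi * (1 - cos th1)"
  have al: "\<alpha> > 0" unfolding \<alpha>_def using th cos_monotone_0_pi[of 0 th1]
    by simp
  define K where "K = nat \<lceil>tan th1 / pi\<rceil> + 1"
  have "tan th1 / pi < real K" unfolding K_def by linarith
  then have Kb: "tan th1 < real K * pi" by (simp add: divide_less_eq)
  have lt: "tan th1 < eta k" if "K \<le> k" for k
  proof -
    have "real K * pi \<le> real k * pi" using that by simp
    moreover have "real k * pi \<le> eta k" using eta_props(1)[of k] by simp
    ultimately show ?thesis using Kb by linarith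
  qed
  have ind: "Phi th1 (K + n) (eta (K + n)) \<ge> Phi th1 K (eta K) + real n * \<alpha>" for n
  proof (induct n)
    case 0 then show ?case by simp
  next
    case (Suc n)
    have "Phi th1 (Suc (K + n)) (eta (Suc (K + n))) \<ge> Phi th1 (K + n) (eta (K + n)) + \<alpha>"
      using Phi_step[OF th lt[of "K + n"]] unfolding \<alpha>_def by simp
    then show ?case using Suc by (simp add: algebra_simps)
  qed
  show "filterlim (\<lambda>k. Phi th1 k (eta k)) at_top sequentially"
    unfolding filterlim_at_top
  proof
    fix Z :: real
    define N where "N = nat \<lceil>(Z - Phi th1 K (eta K)) / \<alpha>\<rceil>"
    have "(Z - Phi th1 K (eta K)) / \<alpha> \<le> real N" unfolding N_def by linarith
    then have N: "Z \<le> Phi th1 K (eta K) + real N * \<alpha>" using al by (simp add: divide_le_eq)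
    show "eventually (\<lambda>k. Z \<le> Phi th1 k (eta k)) sequentially"
    proof (rule eventually_sequentiallyI[of "K + N"])
      fix k assume "K + N \<le> k"
      define n where "n = k - K"
      have n: "k = K + n" "N \<le> n" using \<open>K + N \<le> k\<close> unfolding n_def by auto
      have "real N * \<alpha> \<le> real n * \<alpha>" using n al by simp
      then show "Z \<le> Phi th1 k (eta k)" using ind[of n] N n by simp
    qed
  qed
qed

end
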